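(* The largest integer $k$ with $1\leq k\leq n$ and $S(k)=0$ is $k=\lfloor\vartheta^+(G)\rfloor$.
   Context: Let $G$ be a simple graph with vertex set $V=\{1,\dots,n\}$, edge set $E$ and adjacency matrix $A$. Let $e$ be the all-ones vector, $\langle M,N\rangle=\operatorname{trace}(M^TN)$, and $X\geq 0$ mean entrywise nonnegativity. For real $t$ with $1\leq t\leq n$, $Q(t)$ is the semidefinite program $$\min \tfrac12\langle A,X\rangle\ \text{ s.t. } X\succeq 0,\ X\geq 0,\ \operatorname{trace}(X)=t,\ Xe=t\operatorname{diag}(X)$$ over symmetric $n\times n$ matrices $X$, and $S(t)$ denotes its optimal value. Schrijver's number is $$\vartheta^+(G)=\max\ \operatorname{trace}(X)\ \text{ s.t. } X-xx^T\succeq 0,\ \operatorname{diag}(X)=x,\ X_{i,j}=0\ \forall [i,j]\in E,\ X\geq 0.$$ *)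

theory Defs
  imports "HOL-Analysis.Analysis"
begin

definition simple_graph :: "('n::finite \<Rightarrow> 'n \<Rightarrow> bool) \<Rightarrow> bool" where
  "simple_graph E \<longleftrightarrow> (\<forall>i j. E i j \<longrightarrow> E j i) \<and> (\<forall>i. \<not> E i i)"

definition adj_matrix :: "('n::finite \<Rightarrow> 'n \<Rightarrow> bool) \<Rightarrow> real^'n^'n" where
  "adj_matrix E = (\<chi> i j. if E i j then 1 else 0)"

definition frob_inner :: "real^'n^'n \<Rightarrow> real^'n^'n \<Rightarrow> real" where
  "frob_inner M N = trace (transpose M ** N)"

definition psd :: "real^'n^'n \<Rightarrow> bool" where
  "psd X \<longleftrightarrow> transpose X = X \<and> (\<forall>v. 0 \<le> v \<bullet> (X *v v))"

definition entrywise_nonneg :: "real^'n^'n \<Rightarrow> bool" where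
  "entrywise_nonneg X \<longleftrightarrow> (\<forall>i j. 0 \<le> X $ i $ j)"

definition diag_vec :: "real^'n^'n \<Rightarrow> real^'n" where
  "diag_vec X = (\<chi> i. X $ i $ i)"

definition ones :: "real^'n" where
  "ones = (\<chi> i. 1)"

definition outer :: "real^'n \<Rightarrow> real^'n \<Rightarrow> real^'n^'n" where
  "outer x y = (\<chi> i j. x $ i * y $ j)"

definition Q_feasible :: "real \<Rightarrow> real^'n::finite^'n \<Rightarrow> bool" where
  "Q_feasible t X \<longleftrightarrow> transpose X = X \<and> psd X \<and> entrywise_nonneg X \<and>
     trace X = t \<and> X *v ones = t *\<^sub>R diag_vec X"

definition S_val :: "('n::finite \<Rightarrow> 'n \<Rightarrow> bool) \<Rightarrow> real \<Rightarrow> real" where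
  "S_val E t = Inf {(1/2) * frob_inner (adj_matrix E) X | X. Q_feasible t X}"

definition theta_plus :: "('n::finite \<Rightarrow> 'n \<Rightarrow> bool) \<Rightarrow> real" where
  "theta_plus E = Sup {trace X | X x. transpose X = X \<and> psd (X - outer x x) \<and> diag_vec X = x \<and>
      (\<forall>i j. E i j \<longrightarrow> X $ i $ j = 0) \<and> entrywise_nonneg X}"

end

theory Submission
  imports Defs
begin

definition B :: "real^'n^'n \<Rightarrow> ('n::finite \<Rightarrow> real) \<Rightarrow> ('n \<Rightarrow> real) \<Rightarrow> real" where
  "B X u v = (\<Sum>i\<in>UNIV. \<Sum>j\<in>UNIV. u i * X$i$j * v j)"

lemma qf_eq: "v \<bullet> (X *v v) = B X (\<lambda>i. v$i) (\<lambda>i. v$i)"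
  by (simp add: B_def inner_vec_def matrix_vector_mult_def sum_distrib_left mult.assoc)

lemma psd_iff: "psd X \<longleftrightarrow> (\<forall>i j. X$i$j = X$j$i) \<and> (\<forall>u. 0 \<le> B X u u)"
proof -
  have "(\<forall>v. 0 \<le> v \<bullet> (X *v v)) \<longleftrightarrow> (\<forall>u. 0 \<le> B X u u)"
    unfolding qf_eq
  proof (intro iffI allI)
    fix u assume H: "\<forall>v. 0 \<le> B X (\<lambda>i. v$i) (\<lambda>i. v$i)"
    have "0 \<le> B X (\<lambda>i. (\<chi> k. u k)$i) (\<lambda>i. (\<chi> k. u k)$i)" using H by blast
    then show "0 \<le> B X u u" by simp
  next
    fix v assume "\<forall>u. 0 \<le> B X u u" then show "0 \<le> B X (\<lambda>i. v$i) (\<lambda>i. v$i)" by blast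
  qed
  moreover have "transpose X = X \<longleftrightarrow> (\<forall>i j. X$i$j = X$j$i)"
    by (auto simp: transpose_def vec_eq_iff)
  ultimately show ?thesis unfolding psd_def by blast
qed

lemma trace_eq: "trace X = (\<Sum>i\<in>UNIV. X$i$i)"
  by (simp add: trace_def)

lemma frob_eq: "frob_inner A X = (\<Sum>i\<in>UNIV. \<Sum>k\<in>UNIV. A$k$i * X$k$i)"
  by (simp add: frob_inner_def trace_def matrix_matrix_mult_def transpose_def)

lemma rowsum_eq: "X *v ones = t *\<^sub>R diag_vec X \<longleftrightarrow> (\<forall>i. (\<Sum>j\<in>UNIV. X$i$j) = t * X$i$i)"
  by (simp add: vec_eq_iff matrix_vector_mult_def ones_def diag_vec_def)

lemma B_swap: "\<forall>i j. X$i$j = X$j$i \<Longrightarrow> B X u v = B X v u"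
  unfolding B_def
  by (subst sum.swap) (simp add: mult.commute mult.left_commute)

lemma B_expand: "\<forall>i j. X$i$j = X$j$i \<Longrightarrow>
  B X (\<lambda>i. u i + l * v i) (\<lambda>i. u i + l * v i) = B X u u + 2 * l * B X u v + l^2 * B X v v"
proof -
  assume s: "\<forall>i j. X$i$j = X$j$i"
  have "B X (\<lambda>i. u i + l * v i) (\<lambda>i. u i + l * v i) = B X u u + l * B X u v + l * B X v u + l^2 * B X v v"
    unfolding B_def power2_eq_square
    by (simp add: algebra_simps sum.distrib sum_distrib_left)
  then show ?thesis using B_swap[OF s, of u v] by simp
qed

lemma quad_disc:
  fixes a b c :: real
  assumes "\<And>l. 0 \<le> a + 2 * l * b + l^2 * c" "0 \<le> c"
  shows "b^2 \<le> a * c"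
proof (cases "c = 0")
  case True
  show ?thesis
  proof (rule ccontr)
    assume "\<not> ?thesis"
    then have "b \<noteq> 0" using True by simp
    have "0 \<le> a + 2 * (-(a+1)/(2*b)) * b" using assms(1)[of "-(a+1)/(2*b)"] True by simp
    then show False using \<open>b \<noteq> 0\<close> by (simp add: field_simps)
  qed
next
  case False
  then have c: "c > 0" using assms(2) by simp
  have "0 \<le> a + 2 * (-b/c) * b + (-b/c)^2 * c" by (rule assms(1))
  then have "0 \<le> a - b^2 / c" using c by (simp add: power2_eq_square field_simps)
  then show ?thesis using c by (simp add: field_simps)
qed

lemma CS:
  assumes "psd X"
  shows "(B X u v)^2 \<le> B X u u * B X v v"
proof -
  have s: "\<forall>i j. X$i$j = X$j$i" and p: "\<And>w. 0 \<le> B X w w" using assms by (auto simp: psd_iff)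
  show ?thesis
    apply (rule quad_disc)
     apply (metis B_expand[OF s] p)
    by (rule p)
qed

lemma B_diag_comb:
  "B (\<chi> i j. p * Z$i$j + q * (if i = j then d i else 0)) u v
     = p * B Z u v + q * (\<Sum>i\<in>UNIV. u i * d i * v i)"
proof -
  have "B (\<chi> i j. p * Z$i$j + q * (if i = j then d i else 0)) u v
     = (\<Sum>i\<in>UNIV. \<Sum>j\<in>UNIV. p * (u i * Z$i$j * v j) + (if i = j then q * (u i * d i * v i) else 0))"
    unfolding B_def by (intro sum.cong refl) (auto simp: algebra_simps)
  also have "\<dots> = p * B Z u v + q * (\<Sum>i\<in>UNIV. u i * d i * v i)"
    by (simp add: sum.distrib sum_distrib_left B_def)
  finally show ?thesis .
qed

definition constr :: "real^'n^'n \<Rightarrow> real \<Rightarrow> real \<Rightarrow> real^'n^'n::finite" where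
  "constr Z s t = (let a = (if s = 1 then 0 else (t-1)/(s-1)) in
     (\<chi> i j. t * a * Z$i$j + t * (1-a) * (if i = j then Z$i$i else 0)))"

lemma constr_feasible:
  assumes Zp: "psd Z" and Zn: "entrywise_nonneg Z" and Zt: "trace Z = 1"
    and Zr: "\<forall>i. (\<Sum>j\<in>UNIV. Z$i$j) = s * Z$i$i" and t1: "1 \<le> t" and ts: "t \<le> s"
  shows "Q_feasible t (constr Z s t)"
    and "\<And>i j. i \<noteq> j \<Longrightarrow> Z$i$j = 0 \<Longrightarrow> constr Z s t $i$j = 0"
proof -
  define a where "a = (if s = 1 then 0 else (t-1)/(s-1))"
  have a0: "0 \<le> a" and a1: "a \<le> 1" using t1 ts by (auto simp: a_def field_simps)
  have as: "a * s + (1 - a) = t" using t1 ts by (auto simp: a_def field_simps)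
  have X: "constr Z s t = (\<chi> i j. (t*a) * Z$i$j + (t*(1-a)) * (if i = j then Z$i$i else 0))"
    by (simp add: constr_def a_def Let_def)
  have X2: "constr Z s t = (\<chi> i j. (t*a) * Z$i$j + (if i = j then t*(1-a)*Z$i$i else 0))"
    unfolding X by (simp add: vec_eq_iff)
  have sym: "\<forall>i j. Z$i$j = Z$j$i" and pZ: "\<And>u. 0 \<le> B Z u u" using Zp by (auto simp: psd_iff)
  have dn: "\<And>i. 0 \<le> Z$i$i" using Zn by (simp add: entrywise_nonneg_def)
  have "psd (constr Z s t)"
    unfolding psd_iff
  proof (intro conjI allI)
    fix i j show "constr Z s t $ i $ j = constr Z s t $ j $ i" using sym by (auto simp: X)
  next
    fix u
    have "0 \<le> (\<Sum>i\<in>UNIV. u i * Z$i$i * u i)"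
      by (intro sum_nonneg) (metis dn mult.commute mult_nonneg_nonneg mult.assoc zero_le_square)
    then show "0 \<le> B (constr Z s t) u u" unfolding X B_diag_comb
      using pZ[of u] a0 a1 t1 by (intro add_nonneg_nonneg mult_nonneg_nonneg) auto
  qed
  moreover have "transpose (constr Z s t) = constr Z s t" using calculation by (simp add: psd_def)
  moreover have "entrywise_nonneg (constr Z s t)"
    using Zn a0 a1 t1 by (auto simp: X entrywise_nonneg_def)
  moreover have "trace (constr Z s t) = t"
    using Zt by (simp add: X trace_eq sum.distrib sum_distrib_left[symmetric] algebra_simps)
  moreover have "constr Z s t *v ones = t *\<^sub>R diag_vec (constr Z s t)"
    unfolding rowsum_eq
  proof
    fix i
    have "(\<Sum>j\<in>UNIV. constr Z s t $ i $ j) = (\<Sum>j\<in>UNIV. t*a*Z$i$j) + (\<Sum>j\<in>UNIV. (if i = j then t*(1-a)*Z$i$i else 0))"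
      unfolding X2 by (simp add: sum.distrib)
    also have "\<dots> = t * a * (s * Z$i$i) + t * (1-a) * Z$i$i"
      using Zr by (simp add: sum_distrib_left[symmetric])
    also have "\<dots> = t * Z$i$i * (a * s + (1 - a))" by (simp add: algebra_simps)
    also have "\<dots> = t * (t * Z$i$i)" using as by simp
    finally show "(\<Sum>j\<in>UNIV. constr Z s t $ i $ j) = t * constr Z s t $ i $ i"
      by (simp add: X2 algebra_simps)
  qed
  ultimately show "Q_feasible t (constr Z s t)" by (simp add: Q_feasible_def)
  show "\<And>i j. i \<noteq> j \<Longrightarrow> Z$i$j = 0 \<Longrightarrow> constr Z s t $i$j = 0" by (simp add: X)
qed


lemma B_outer: "B (X - outer x x) u u = B X u u - (\<Sum>i\<in>UNIV. u i * x$i)^2"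
proof -
  have "B (X - outer x x) u u = (\<Sum>i\<in>UNIV. \<Sum>j\<in>UNIV. u i * X$i$j * u j - (u i * x$i) * (u j * x$j))"
    unfolding B_def outer_def by (simp add: algebra_simps)
  also have "\<dots> = B X u u - (\<Sum>i\<in>UNIV. \<Sum>j\<in>UNIV. (u i * x$i) * (u j * x$j))"
    unfolding B_def by (simp only: sum_subtractf)
  also have "(\<Sum>i\<in>UNIV. \<Sum>j\<in>UNIV. (u i * x$i) * (u j * x$j)) = (\<Sum>i\<in>UNIV. u i * x$i)^2"
    by (simp only: power2_eq_square sum_product)
  finally show ?thesis .
qed

lemma B_ind: "B Y (\<lambda>k. if k = i then 1 else 0) (\<lambda>k. if k = j then 1 else 0) = Y$i$j"
proof -
  have "\<And>k. (\<Sum>l\<in>UNIV. (if k = i then 1 else 0) * Y$k$l * (if l = j then 1 else 0)) = (if k = i then Y$k$j else 0)"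
  proof -
    fix k
    have "(\<Sum>l\<in>UNIV. (if k = i then 1 else 0) * Y$k$l * (if l = j then 1 else 0)) = (\<Sum>l\<in>UNIV. if l = j then (if k = i then Y$k$l else 0) else 0)"
      by (intro sum.cong) auto
    then show "?thesis k" by simp
  qed
  then show ?thesis unfolding B_def by simp
qed

lemma B_ones_l: "B X (\<lambda>_. 1) (\<lambda>_. 1) = (\<Sum>i\<in>UNIV. \<Sum>j\<in>UNIV. X$i$j)"
  by (simp add: B_def)

lemma schur:
  assumes p: "psd X" and t: "0 < t" and r: "\<forall>i. (\<Sum>j\<in>UNIV. X$i$j) = t * X$i$i"
    and tr: "trace X = t"
  shows "psd (X - outer (diag_vec X) (diag_vec X))"
  unfolding psd_iff
proof (intro conjI allI)
  fix i j show "(X - outer (diag_vec X) (diag_vec X)) $ i $ j = (X - outer (diag_vec X) (diag_vec X)) $ j $ i"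
    using p by (simp add: psd_iff outer_def mult.commute)
next
  fix u
  have "B X u (\<lambda>_. 1) = (\<Sum>i\<in>UNIV. u i * (\<Sum>j\<in>UNIV. X$i$j))"
    by (simp add: B_def sum_distrib_left)
  also have "\<dots> = (\<Sum>i\<in>UNIV. t * (u i * diag_vec X $ i))"
    using r by (intro sum.cong refl) (simp add: diag_vec_def mult_ac)
  finally have b: "B X u (\<lambda>_. 1) = t * (\<Sum>i\<in>UNIV. u i * diag_vec X $ i)"
    by (simp add: sum_distrib_left)
  have "B X (\<lambda>_. 1) (\<lambda>_. 1) = (\<Sum>i\<in>UNIV. t * X$i$i)"
    using r by (simp add: B_def)
  also have "\<dots> = t^2" using tr by (simp add: trace_eq power2_eq_square sum_distrib_left[symmetric])
  finally have c: "B X (\<lambda>_. 1) (\<lambda>_. 1) = t^2" .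
  have "(B X u (\<lambda>_. 1))^2 \<le> B X u u * B X (\<lambda>_. 1) (\<lambda>_. 1)" by (rule CS[OF p])
  then have "t^2 * (\<Sum>i\<in>UNIV. u i * diag_vec X $ i)^2 \<le> B X u u * t^2"
    by (simp add: b c power_mult_distrib)
  then have "(\<Sum>i\<in>UNIV. u i * diag_vec X $ i)^2 \<le> B X u u" using t
    by (simp add: mult.commute)
  then show "0 \<le> B (X - outer (diag_vec X) (diag_vec X)) u u" by (simp add: B_outer)
qed

lemma amgm: "(a::real) * b \<le> ((a+b)/2)^2"
proof -
  have "((a+b)/2)^2 - a*b = ((a-b)/2)^2" by (simp add: power2_eq_square field_simps)
  moreover have "0 \<le> ((a-b)/2)^2" by simp
  ultimately show ?thesis by linarith
qed

lemma sq_le: "(y::real)^2 \<le> c^2 \<Longrightarrow> 0 \<le> c \<Longrightarrow> y \<le> c"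
  using abs_le_square_iff[of y c] by (metis abs_ge_self abs_of_nonneg order_trans power2_le_imp_le)

lemma CS_entry: assumes "psd Y" shows "(Y$i$j)^2 \<le> Y$i$i * Y$j$j"
proof -
  have "(B Y (\<lambda>k. if k = i then 1 else 0) (\<lambda>k. if k = j then 1 else 0))^2
     \<le> B Y (\<lambda>k. if k = i then 1 else 0) (\<lambda>k. if k = i then 1 else 0) * B Y (\<lambda>k. if k = j then 1 else 0) (\<lambda>k. if k = j then 1 else 0)"
    by (rule CS[OF assms])
  then show ?thesis unfolding B_ind .
qed

lemma entry_bound:
  assumes "psd Y" "entrywise_nonneg Y"
  shows "Y$i$j \<le> (Y$i$i + Y$j$j) / 2"
proof -
  have n: "0 \<le> Y$i$i" "0 \<le> Y$j$j" using assms(2) by (auto simp: entrywise_nonneg_def)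
  have "(Y$i$j)^2 \<le> Y$i$i * Y$j$j" by (rule CS_entry[OF assms(1)])
  also have "\<dots> \<le> ((Y$i$i + Y$j$j) / 2)^2" by (rule amgm)
  finally show ?thesis by (rule sq_le) (use n in simp)
qed

lemma bounded_entries:
  assumes "\<forall>Y\<in>S. \<forall>i j. \<bar>(Y::real^'n::finite^'m::finite)$i$j\<bar> \<le> c"
  shows "bounded S"
  unfolding bounded_iff
proof (intro exI ballI)
  fix Y assume Y: "Y \<in> S"
  have "norm Y \<le> (\<Sum>i\<in>UNIV. norm (Y$i))" by (simp add: norm_vec_def L2_set_le_sum)
  also have "\<dots> \<le> (\<Sum>i\<in>(UNIV::'m set). \<Sum>j\<in>(UNIV::'n set). c)"
  proof (rule sum_mono)
    fix i
    have "norm (Y$i) \<le> (\<Sum>j\<in>UNIV. \<bar>Y$i$j\<bar>)" by (rule norm_le_l1_cart)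
    also have "\<dots> \<le> (\<Sum>j\<in>(UNIV::'n set). c)" using assms Y by (intro sum_mono) auto
    finally show "norm (Y$i) \<le> (\<Sum>j\<in>(UNIV::'n set). c)" .
  qed
  finally show "norm Y \<le> (\<Sum>i\<in>(UNIV::'m set). \<Sum>j\<in>(UNIV::'n set). c)" .
qed


definition Fset :: "('n::finite \<Rightarrow> 'n \<Rightarrow> bool) \<Rightarrow> (real^'n^'n) set" where
  "Fset E = {Y. psd Y \<and> entrywise_nonneg Y \<and> (\<forall>i j. E i j \<longrightarrow> Y$i$j = 0) \<and> trace Y = 1}"

definition phi :: "real^'n^'n \<Rightarrow> real" where
  "phi Y = (\<Sum>i\<in>UNIV. \<Sum>j\<in>UNIV. Y$i$j)"

lemma Fset_alt: "Fset E = {Y. (\<forall>i j. Y$i$j = Y$j$i) \<and> (\<forall>u. 0 \<le> (\<Sum>i\<in>UNIV. \<Sum>j\<in>UNIV. u i * Y$i$j * u j))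
   \<and> (\<forall>i j. 0 \<le> Y$i$j) \<and> (\<forall>i j. of_bool (E i j) * Y$i$j = 0) \<and> (\<Sum>i\<in>UNIV. Y$i$i) = 1}"
  by (auto simp: Fset_def psd_iff B_def entrywise_nonneg_def trace_eq)

lemma Fset_closed: "closed (Fset E)"
  unfolding Fset_alt
  by (intro closed_Collect_conj closed_Collect_all closed_Collect_eq closed_Collect_le continuous_intros)

lemma Fset_entries: assumes "Y \<in> Fset E" shows "0 \<le> Y$i$j" "Y$i$j \<le> (Y$i$i + Y$j$j)/2" "Y$i$i \<le> 1"
proof -
  have p: "psd Y" and n: "entrywise_nonneg Y" and t: "(\<Sum>i\<in>UNIV. Y$i$i) = 1"
    using assms by (auto simp: Fset_def trace_eq)
  show "0 \<le> Y$i$j" using n by (simp add: entrywise_nonneg_def)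
  show "Y$i$j \<le> (Y$i$i + Y$j$j)/2" by (rule entry_bound[OF p n])
  have "Y$i$i \<le> (\<Sum>i\<in>UNIV. Y$i$i)" using n by (intro member_le_sum) (auto simp: entrywise_nonneg_def)
  then show "Y$i$i \<le> 1" using t by simp
qed

lemma Fset_compact: "compact (Fset E)"
proof -
  have "bounded (Fset E)"
  proof (rule bounded_entries[where c=1], intro ballI allI)
    fix Y i j assume Y: "Y \<in> Fset E"
    show "\<bar>Y$i$j\<bar> \<le> 1" using Fset_entries(1,2)[OF Y, of i j] Fset_entries(3)[OF Y, of i] Fset_entries(3)[OF Y, of j]
      by auto
  qed
  then show ?thesis using Fset_closed compact_eq_bounded_closed by blast
qed

definition e1 :: "'n::finite \<Rightarrow> real^'n^'n" where
  "e1 k = (\<chi> i j. if i = k \<and> j = k then 1 else 0)"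

lemma B_e1: "B (e1 k) u u = (u k)^2"
proof -
  have "B (e1 k) u u = (\<Sum>i\<in>UNIV. \<Sum>j\<in>UNIV. if j = k then (if i = k then u k * u k else 0) else 0)"
    unfolding B_def e1_def by (intro sum.cong refl) auto
  also have "\<dots> = (\<Sum>i\<in>UNIV. if i = k then u k * u k else 0)" by (intro sum.cong refl) simp
  also have "\<dots> = u k * u k" by simp
  finally show ?thesis by (simp add: power2_eq_square)
qed

lemma e1_psd: "psd (e1 k)"
  unfolding psd_iff B_e1 by (auto simp: e1_def)

lemma e1_trace: "trace (e1 k) = 1"
  by (simp add: trace_eq e1_def)

lemma e1_F: assumes "simple_graph E" shows "e1 k \<in> Fset E"
  using assms e1_psd e1_trace by (auto simp: Fset_def entrywise_nonneg_def e1_def simple_graph_def)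

lemma phi_cont: "continuous_on S phi"
  unfolding phi_def by (intro continuous_intros)

lemma B_ind_ones: "B X (\<lambda>k. if k = i then 1 else 0) (\<lambda>_. 1) = (\<Sum>j\<in>UNIV. X$i$j)"
proof -
  have "B X (\<lambda>k. if k = i then 1 else 0) (\<lambda>_. 1) = (\<Sum>k\<in>UNIV. if k = i then (\<Sum>j\<in>UNIV. X$k$j) else 0)"
    unfolding B_def by (intro sum.cong refl) auto
  then show ?thesis by simp
qed


lemma scale_F:
  assumes Y: "Y \<in> Fset E" and d: "\<And>i. 0 \<le> d i" and q: "0 < (\<Sum>i\<in>UNIV. Y$i$i * (d i)^2)"
  shows "(\<chi> i j. d i * Y$i$j * d j / (\<Sum>i\<in>UNIV. Y$i$i * (d i)^2)) \<in> Fset E"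
proof -
  define q where "q = (\<Sum>i\<in>UNIV. Y$i$i * (d i)^2)"
  define Z where "Z = (\<chi> i j. d i * Y$i$j * d j / q)"
  have p: "psd Y" and n: "entrywise_nonneg Y" and z: "\<forall>i j. E i j \<longrightarrow> Y$i$j = 0" and t: "trace Y = 1"
    using Y by (auto simp: Fset_def)
  have qp: "0 < q" using q q_def by simp
  have "psd Z" unfolding psd_iff
  proof (intro conjI allI)
    fix i j show "Z$i$j = Z$j$i" using p by (simp add: Z_def psd_iff mult_ac)
  next
    fix u
    have "B Z u u = B Y (\<lambda>i. u i * d i) (\<lambda>i. u i * d i) / q"
      unfolding B_def Z_def by (simp add: sum_divide_distrib mult_ac)
    then show "0 \<le> B Z u u" using p qp by (simp add: psd_iff)
  qed
  moreover have "entrywise_nonneg Z" using n d qp by (simp add: entrywise_nonneg_def Z_def)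
  moreover have "\<forall>i j. E i j \<longrightarrow> Z$i$j = 0" using z by (simp add: Z_def)
  moreover have "trace Z = 1"
  proof -
    have "trace Z = (\<Sum>i\<in>UNIV. Y$i$i * (d i)^2) / q"
      by (simp add: trace_eq Z_def sum_divide_distrib power2_eq_square mult_ac)
    then show ?thesis using qp q_def by simp
  qed
  ultimately show ?thesis unfolding Fset_def Z_def q_def by blast
qed

lemma stationary:
  assumes sg: "simple_graph E" and Y: "Y \<in> Fset E" and mx: "\<forall>Z\<in>Fset E. phi Z \<le> phi Y"
  shows "\<forall>i. (\<Sum>j\<in>UNIV. Y$i$j) = phi Y * Y$i$i"
proof
  fix i0
  define s where "s = phi Y"
  have p: "psd Y" and n: "\<And>i j. 0 \<le> Y$i$j" and t: "(\<Sum>i\<in>UNIV. Y$i$i) = 1"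
    using Y by (auto simp: Fset_def entrywise_nonneg_def trace_eq)
  have sym: "\<And>i j. Y$i$j = Y$j$i" using p by (simp add: psd_iff)
  have AB: "B Y d d \<le> s * (\<Sum>i\<in>UNIV. Y$i$i * (d i)^2)" if d: "\<And>i. 0 \<le> d i" for d
  proof (cases "0 < (\<Sum>i\<in>UNIV. Y$i$i * (d i)^2)")
    case True
    define q where "q = (\<Sum>i\<in>UNIV. Y$i$i * (d i)^2)"
    have qp: "0 < q" using True q_def by simp
    have "phi (\<chi> i j. d i * Y$i$j * d j / q) \<le> s"
      using mx scale_F[OF Y d True] s_def q_def by auto
    moreover have "phi (\<chi> i j. d i * Y$i$j * d j / q) = B Y d d / q"
      unfolding phi_def B_def by (simp add: sum_divide_distrib)
    ultimately have "B Y d d / q \<le> s" by simp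
    then show ?thesis using qp q_def by (simp add: divide_le_eq)
  next
    case False
    have tn: "\<And>i. 0 \<le> Y$i$i * (d i)^2" using n by simp
    then have "(\<Sum>i\<in>UNIV. Y$i$i * (d i)^2) = 0" using False by (meson not_less sum_nonneg order.antisym)
    then have z: "\<And>i. Y$i$i * (d i)^2 = 0" using tn by (simp add: sum_nonneg_eq_0_iff)
    have z0: "\<And>i j. d i * Y$i$j * d j = 0"
    proof -
      fix i j
      show "d i * Y$i$j * d j = 0"
      proof (cases "d i = 0 \<or> d j = 0")
        case True then show ?thesis by auto
      next
        case False
        then have "Y$i$i = 0" using z[of i] by simp
        moreover have "(Y$i$j)^2 \<le> Y$i$i * Y$j$j" by (rule CS_entry[OF p])
        ultimately have "Y$i$j = 0" by simp
        then show ?thesis by simp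
      qed
    qed
    have "B Y d d = 0" unfolding B_def
      by (rule sum.neutral, rule ballI, rule sum.neutral, rule ballI, rule z0)
    then show ?thesis using \<open>(\<Sum>i\<in>UNIV. Y$i$i * (d i)^2) = 0\<close> by simp
  qed
  have C: "B Y d d \<le> s * (\<Sum>i\<in>UNIV. Y$i$i * (d i)^2)" for d
  proof -
    have "B Y d d \<le> B Y (\<lambda>i. \<bar>d i\<bar>) (\<lambda>i. \<bar>d i\<bar>)"
      unfolding B_def
    proof (intro sum_mono)
      fix i j
      have "d i * Y$i$j * d j \<le> \<bar>d i * Y$i$j * d j\<bar>" by simp
      also have "\<dots> = \<bar>d i\<bar> * Y$i$j * \<bar>d j\<bar>" using n[of i j] by (simp add: abs_mult)
      finally show "d i * Y$i$j * d j \<le> \<bar>d i\<bar> * Y$i$j * \<bar>d j\<bar>" .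
    qed
    also have "\<dots> \<le> s * (\<Sum>i\<in>UNIV. Y$i$i * (\<bar>d i\<bar>)^2)" by (rule AB) simp
    finally show ?thesis by simp
  qed
  define M where "M = (\<chi> i j. (-1) * Y$i$j + s * (if i = j then Y$i$i else 0))"
  have BM: "B M u v = - B Y u v + s * (\<Sum>i\<in>UNIV. u i * Y$i$i * v i)" for u v
    unfolding M_def B_diag_comb by simp
  have "psd M" unfolding psd_iff
  proof (intro conjI allI)
    fix i j show "M$i$j = M$j$i" using sym by (simp add: M_def)
  next
    fix u
    have "(\<Sum>i\<in>UNIV. u i * Y$i$i * u i) = (\<Sum>i\<in>UNIV. Y$i$i * (u i)^2)"
      by (simp add: power2_eq_square mult_ac)
    then show "0 \<le> B M u u" using C[of u] by (simp add: BM)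
  qed
  have M11: "B M (\<lambda>_. 1) (\<lambda>_. 1) = 0"
  proof -
    have "B M (\<lambda>_. 1) (\<lambda>_. 1) = - B Y (\<lambda>_. 1) (\<lambda>_. 1) + s * (\<Sum>i\<in>UNIV. 1 * Y$i$i * 1)"
      by (rule BM)
    moreover have "B Y (\<lambda>_. 1) (\<lambda>_. 1) = s" unfolding B_ones_l s_def phi_def ..
    ultimately show ?thesis using t by simp
  qed
  have "(B M (\<lambda>k. if k = i0 then 1 else 0) (\<lambda>_. 1))^2 \<le> 0"
    using CS[OF \<open>psd M\<close>, of "\<lambda>k. if k = i0 then 1 else 0" "\<lambda>_. 1"] M11 by simp
  then have h1: "B M (\<lambda>k. if k = i0 then 1 else 0) (\<lambda>_. 1) = 0" by simp
  have h2: "(\<Sum>i\<in>UNIV. (if i = i0 then 1 else 0) * Y$i$i * 1) = Y$i0$i0"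
  proof -
    have "(\<Sum>i\<in>UNIV. (if i = i0 then 1 else 0) * Y$i$i * 1) = (\<Sum>i\<in>UNIV. if i = i0 then Y$i$i else 0)"
      by (intro sum.cong refl) simp
    also have "\<dots> = Y$i0$i0" by simp
    finally show ?thesis .
  qed
  have h3: "B M (\<lambda>k. if k = i0 then 1 else 0) (\<lambda>_. 1) = - B Y (\<lambda>k. if k = i0 then 1 else 0) (\<lambda>_. 1)
       + s * (\<Sum>i\<in>UNIV. (if i = i0 then 1 else 0) * Y$i$i * 1)" by (rule BM)
  have h4: "B Y (\<lambda>k. if k = i0 then 1 else 0) (\<lambda>_. 1) = (\<Sum>j\<in>UNIV. Y$i0$j)" by (rule B_ind_ones)
  have h5: "s * (\<Sum>i\<in>UNIV. (if i = i0 then 1 else 0) * Y$i$i * 1) = s * Y$i0$i0" by (simp only: h2)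
  show "(\<Sum>j\<in>UNIV. Y$i0$j) = phi Y * Y$i0$i0"
    using h1 h3 h4 h5 unfolding s_def by linarith
qed


lemma adj_entry: "adj_matrix E $ i $ j = (if E i j then 1 else 0)"
  by (simp add: adj_matrix_def)

lemma frob_nonneg: "entrywise_nonneg X \<Longrightarrow> 0 \<le> frob_inner (adj_matrix E) X"
  unfolding frob_eq by (intro sum_nonneg) (auto simp: adj_entry entrywise_nonneg_def)

lemma frob_zero: "(\<forall>i j. E i j \<longrightarrow> X$i$j = 0) \<Longrightarrow> frob_inner (adj_matrix E) X = 0"
  unfolding frob_eq by (intro sum.neutral ballI) (auto simp: adj_entry)

lemma frob_zero_D:
  assumes "entrywise_nonneg X" "frob_inner (adj_matrix E) X = 0" "E a b"
  shows "X$a$b = 0"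
proof -
  have tn: "\<And>i k. 0 \<le> adj_matrix E $ k $ i * X$k$i" using assms(1) by (auto simp: adj_entry entrywise_nonneg_def)
  have inn: "\<And>i. 0 \<le> (\<Sum>k\<in>UNIV. adj_matrix E $ k $ i * X$k$i)" using tn by (intro sum_nonneg) auto
  have "(\<Sum>k\<in>UNIV. adj_matrix E $ k $ b * X$k$b) = 0"
    using assms(2) inn unfolding frob_eq by (simp add: sum_nonneg_eq_0_iff)
  then have "adj_matrix E $ a $ b * X$a$b = 0" using tn by (simp add: sum_nonneg_eq_0_iff)
  then show ?thesis using assms(3) by (simp add: adj_entry)
qed

lemma S_zero_if:
  assumes "Q_feasible t X0" "\<forall>i j. E i j \<longrightarrow> X0$i$j = 0"
  shows "S_val E t = 0"
  unfolding S_val_def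
proof (rule cInf_eq_minimum)
  show "0 \<in> {(1/2) * frob_inner (adj_matrix E) X | X. Q_feasible t X}"
    using assms frob_zero[of E X0] by force
next
  fix v assume "v \<in> {(1/2) * frob_inner (adj_matrix E) X | X. Q_feasible t X}"
  then obtain X where "Q_feasible t X" "v = (1/2) * frob_inner (adj_matrix E) X" by blast
  then show "0 \<le> v" using frob_nonneg[of X E] by (simp add: Q_feasible_def)
qed

lemma Q_alt: "{X. Q_feasible t X} = {X. (\<forall>i j. X$i$j = X$j$i) \<and> (\<forall>u. 0 \<le> (\<Sum>i\<in>UNIV. \<Sum>j\<in>UNIV. u i * X$i$j * u j))
   \<and> (\<forall>i j. 0 \<le> X$i$j) \<and> (\<Sum>i\<in>UNIV. X$i$i) = t \<and> (\<forall>i. (\<Sum>j\<in>UNIV. X$i$j) = t * X$i$i)}"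
  unfolding Q_feasible_def rowsum_eq psd_iff
  by (auto simp: B_def entrywise_nonneg_def trace_eq transpose_def vec_eq_iff)

lemma Q_compact: assumes "0 \<le> t" shows "compact {X. Q_feasible t X}"
proof -
  have cl: "closed {X. Q_feasible t X}"
    unfolding Q_alt
    by (intro closed_Collect_conj closed_Collect_all closed_Collect_eq closed_Collect_le continuous_intros)
  have "bounded {X. Q_feasible t X}"
  proof (rule bounded_entries[where c="t*t"], intro ballI allI)
    fix X i j assume "X \<in> {X. Q_feasible t X}"
    then have n: "\<And>i j. 0 \<le> X$i$j" and tr: "(\<Sum>i\<in>UNIV. X$i$i) = t" and r: "\<And>i. (\<Sum>j\<in>UNIV. X$i$j) = t * X$i$i"
      by (auto simp: Q_feasible_def entrywise_nonneg_def trace_eq rowsum_eq)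
    have "X$i$j \<le> (\<Sum>j\<in>UNIV. X$i$j)" using n by (intro member_le_sum) auto
    also have "\<dots> = t * X$i$i" by (rule r)
    also have "\<dots> \<le> t * t"
    proof (rule mult_left_mono[OF _ assms])
      show "X$i$i \<le> t" using tr n member_le_sum[of i UNIV "\<lambda>i. X$i$i"] by simp
    qed
    finally show "\<bar>X$i$j\<bar> \<le> t * t" using n[of i j] by simp
  qed
  then show ?thesis using cl compact_eq_bounded_closed by blast
qed

lemma Q_nonempty:
  assumes "1 \<le> t" "t \<le> real CARD('n::finite)"
  shows "\<exists>X::real^'n^'n. Q_feasible t X"
proof -
  define n where "n = real CARD('n)"
  have np: "0 < n" by (simp add: n_def)
  define J where "J = ((\<chi> i j. 1 / n) :: real^'n^'n)"
  have "psd J" unfolding psd_iff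
  proof (intro conjI allI)
    fix i j show "J$i$j = J$j$i" by (simp add: J_def)
  next
    fix u
    have "B J u u = (\<Sum>i\<in>UNIV. u i) * (\<Sum>j\<in>UNIV. u j) / n"
      by (simp add: B_def J_def sum_product sum_divide_distrib)
    also have "\<dots> = (\<Sum>i\<in>UNIV. u i)^2 / n" by (simp add: power2_eq_square)
    finally show "0 \<le> B J u u" using np by simp
  qed
  moreover have "entrywise_nonneg J" using np by (simp add: J_def entrywise_nonneg_def)
  moreover have "trace J = 1" using np by (simp add: J_def trace_eq n_def)
  moreover have "\<forall>i. (\<Sum>j\<in>UNIV. J$i$j) = n * J$i$i" using np by (simp add: J_def n_def)
  ultimately show ?thesis using constr_feasible(1)[of J n t] assms n_def by blast
qed


lemma phi_e1: "phi (e1 k) = 1"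
  using B_e1[of k "\<lambda>_. 1"] by (simp add: B_ones_l phi_def)

lemma phi_le_card: fixes Y :: "real^'n::finite^'n" assumes "Y \<in> Fset E" shows "phi Y \<le> real CARD('n::finite)"
proof -
  have t: "(\<Sum>i\<in>(UNIV::'n set). Y$i$i) = 1" using assms by (simp add: Fset_def trace_eq)
  have "phi Y \<le> (\<Sum>i\<in>(UNIV::'n set). \<Sum>j\<in>(UNIV::'n set). (Y$i$i + Y$j$j)/2)"
    unfolding phi_def by (intro sum_mono) (rule Fset_entries(2)[OF assms])
  also have "\<dots> = (\<Sum>i\<in>(UNIV::'n set). \<Sum>j\<in>(UNIV::'n set). Y$i$i/2) + (\<Sum>i\<in>(UNIV::'n set). \<Sum>j\<in>(UNIV::'n set). Y$j$j/2)"
    by (simp add: add_divide_distrib sum.distrib)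
  also have "(\<Sum>i\<in>(UNIV::'n set). \<Sum>j\<in>(UNIV::'n set). Y$i$i/2) = real CARD('n) / 2"
    using t by (simp add: sum_distrib_left[symmetric] sum_divide_distrib[symmetric])
  also have "(\<Sum>i\<in>(UNIV::'n set). \<Sum>j\<in>(UNIV::'n set). Y$j$j/2) = real CARD('n) / 2"
    using t by (simp add: sum_divide_distrib[symmetric])
  finally show ?thesis by simp
qed

lemma theta_elem_le:
  assumes tr: "transpose X = X" and p: "psd (X - outer x x)" and d: "diag_vec X = x"
    and z: "\<forall>i j. E i j \<longrightarrow> X$i$j = 0" and n: "entrywise_nonneg X"
    and mx: "\<forall>Z\<in>Fset E. phi Z \<le> s" and s1: "1 \<le> s"
  shows "trace X \<le> s"
proof -
  define r where "r = trace X"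
  have sym: "\<forall>i j. X$i$j = X$j$i" using tr by (auto simp: transpose_def vec_eq_iff)
  have pX: "psd X" unfolding psd_iff
  proof (intro conjI sym allI)
    fix u
    have "0 \<le> B (X - outer x x) u u" using p by (simp add: psd_iff)
    then show "0 \<le> B X u u" unfolding B_outer by (meson diff_ge_0_iff_ge order_trans zero_le_power2)
  qed
  have nn: "\<And>i j. 0 \<le> X$i$j" using n by (simp add: entrywise_nonneg_def)
  have r0: "0 \<le> r" unfolding r_def trace_eq using nn by (simp add: sum_nonneg)
  show ?thesis
  proof (cases "r = 0")
    case True then show ?thesis using s1 r_def by simp
  next
    case False
    then have rp: "0 < r" using r0 by simp
    define Z where "Z = (\<chi> i j. X$i$j / r)"
    have "psd Z" unfolding psd_iff
    proof (intro conjI allI)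
      fix i j show "Z$i$j = Z$j$i" using sym by (simp add: Z_def)
    next
      fix u
      have "B Z u u = B X u u / r" unfolding B_def Z_def by (simp add: sum_divide_distrib)
      then show "0 \<le> B Z u u" using pX rp by (simp add: psd_iff)
    qed
    moreover have "entrywise_nonneg Z" using nn rp by (simp add: Z_def entrywise_nonneg_def)
    moreover have "\<forall>i j. E i j \<longrightarrow> Z$i$j = 0" using z by (simp add: Z_def)
    moreover have "trace Z = 1" using rp unfolding Z_def trace_eq r_def
      by (simp add: sum_divide_distrib[symmetric])
    ultimately have ZF: "Z \<in> Fset E" by (simp add: Fset_def)
    have "phi Z = phi X / r" unfolding phi_def Z_def by (simp add: sum_divide_distrib)
    moreover have "phi Z \<le> s" using mx ZF by blast
    ultimately have "phi X / r \<le> s" by simp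
    then have A: "phi X \<le> s * r" using rp by (simp add: divide_le_eq)
    have "0 \<le> B (X - outer x x) (\<lambda>_. 1) (\<lambda>_. 1)" using p by (simp add: psd_iff)
    moreover have "(\<Sum>i\<in>UNIV. 1 * x$i) = r" using d unfolding r_def trace_eq by (auto simp: diag_vec_def)
    ultimately have "0 \<le> B X (\<lambda>_. 1) (\<lambda>_. 1) - r^2" by (simp only: B_outer)
    moreover have "B X (\<lambda>_. 1) (\<lambda>_. 1) = phi X" unfolding B_ones_l phi_def ..
    ultimately have "r^2 \<le> phi X" by simp
    then have "r * r \<le> s * r" using A by (simp add: power2_eq_square)
    then show ?thesis using rp r_def by simp
  qed
qed

lemma theta_one: fixes E :: "'n::finite \<Rightarrow> 'n \<Rightarrow> bool" assumes "simple_graph E" shows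
  "(1::real) \<in> {trace X | X x. transpose X = X \<and> psd (X - outer x x) \<and> diag_vec X = x \<and>
      (\<forall>i j. E i j \<longrightarrow> X $ i $ j = 0) \<and> entrywise_nonneg X}"
proof -
  fix k :: 'n
  have o: "outer (diag_vec (e1 k)) (diag_vec (e1 k)) = e1 k"
    by (auto simp: outer_def diag_vec_def e1_def vec_eq_iff)
  have p0: "psd (0::real^'n^'n)" by (simp add: psd_iff B_def)
  have "transpose (e1 k) = e1 k" using e1_psd[of k] by (simp add: psd_def)
  moreover have "entrywise_nonneg (e1 k)" by (simp add: e1_def entrywise_nonneg_def)
  moreover have "\<forall>i j. E i j \<longrightarrow> e1 k $ i $ j = 0" using assms by (auto simp: e1_def simple_graph_def)
  ultimately show ?thesis using e1_trace[of k] o p0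
    by (intro CollectI exI[of _ "e1 k"] exI[of _ "diag_vec (e1 k)"]) simp
qed


theorem mainTheorem13:
  fixes E :: "'n::finite \<Rightarrow> 'n \<Rightarrow> bool"
  assumes "simple_graph E"
  shows "\<lfloor>theta_plus E\<rfloor> \<in> {k::int. 1 \<le> k \<and> k \<le> int CARD('n) \<and> S_val E (of_int k) = 0}
    \<and> (\<forall>k::int. 1 \<le> k \<and> k \<le> int CARD('n) \<and> S_val E (of_int k) = 0 \<longrightarrow> k \<le> \<lfloor>theta_plus E\<rfloor>)"
proof -
  have sg: "simple_graph E" by (rule assms)
  have irr: "\<And>i j. E i j \<Longrightarrow> i \<noteq> j" using sg by (auto simp: simple_graph_def)
  have Fne: "Fset E \<noteq> {}" using e1_F[OF sg] by blast
  obtain Ys where Ys: "Ys \<in> Fset E" and mx: "\<forall>Z\<in>Fset E. phi Z \<le> phi Ys"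
    using continuous_attains_sup[OF Fset_compact Fne phi_cont] by blast
  define s where "s = phi Ys"
  have mxs: "\<forall>Z\<in>Fset E. phi Z \<le> s" using mx s_def by simp
  have rows: "\<forall>i. (\<Sum>j\<in>UNIV. Ys$i$j) = s * Ys$i$i" using stationary[OF sg Ys mx] s_def by simp
  have s1: "1 \<le> s" using mxs e1_F[OF sg] phi_e1 by metis
  have sn: "s \<le> real CARD('n)" using phi_le_card[OF Ys] s_def by simp
  have YsP: "psd Ys" "entrywise_nonneg Ys" "trace Ys = 1" "\<forall>i j. E i j \<longrightarrow> Ys$i$j = 0"
    using Ys by (auto simp: Fset_def)
  define T where "T = {trace X | X x. transpose X = X \<and> psd (X - outer x x) \<and> diag_vec X = x \<and>
      (\<forall>i j. E i j \<longrightarrow> X $ i $ j = 0) \<and> entrywise_nonneg X}"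
  have th: "theta_plus E = Sup T" unfolding theta_plus_def T_def ..
  have Tb: "\<forall>r\<in>T. r \<le> s"
    unfolding T_def using theta_elem_le[OF _ _ _ _ _ mxs s1] by blast
  have T1: "1 \<in> T" unfolding T_def by (rule theta_one[OF sg])
  have bdd: "bdd_above T" using Tb by (auto simp: bdd_above_def)
  have th1: "1 \<le> theta_plus E" unfolding th by (rule cSup_upper[OF T1 bdd])
  have ths: "theta_plus E \<le> s" unfolding th using T1 Tb by (intro cSup_least) auto
  have partA: "\<lfloor>theta_plus E\<rfloor> \<in> {k::int. 1 \<le> k \<and> k \<le> int CARD('n) \<and> S_val E (of_int k) = 0}"
  proof -
    define k where "k = \<lfloor>theta_plus E\<rfloor>"
    have k1: "1 \<le> k" using th1 by (simp add: k_def le_floor_iff)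
    have kle: "real_of_int k \<le> theta_plus E" by (simp add: k_def)
    have "real_of_int k \<le> real CARD('n)" using kle ths sn by linarith
    then have kn: "k \<le> int CARD('n)" by linarith
    have r1: "1 \<le> real_of_int k" using k1 by simp
    have rs: "real_of_int k \<le> s" using kle ths by linarith
    have "S_val E (of_int k) = 0"
    proof (rule S_zero_if)
      show "Q_feasible (of_int k) (constr Ys s (of_int k))"
        by (rule constr_feasible(1)[OF YsP(1,2,3) rows r1 rs])
      show "\<forall>i j. E i j \<longrightarrow> constr Ys s (of_int k) $ i $ j = 0"
        using constr_feasible(2)[OF YsP(1,2,3) rows r1 rs] YsP(4) irr by blast
    qed
    then show ?thesis using k1 kn k_def by simp
  qed
  have partB: "\<forall>k::int. 1 \<le> k \<and> k \<le> int CARD('n) \<and> S_val E (of_int k) = 0 \<longrightarrow> k \<le> \<lfloor>theta_plus E\<rfloor>"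
  proof (intro allI impI)
    fix k :: int
    assume H: "1 \<le> k \<and> k \<le> int CARD('n) \<and> S_val E (of_int k) = 0"
    define t where "t = real_of_int k"
    have t1: "1 \<le> t" and tn: "t \<le> real CARD('n)" using H by (auto simp: t_def)
    define f where "f = (\<lambda>X::real^'n^'n. (1/2) * frob_inner (adj_matrix E) X)"
    have Qne: "{X::real^'n^'n. Q_feasible t X} \<noteq> {}" using Q_nonempty[OF t1 tn] by auto
    have fc: "continuous_on {X::real^'n^'n. Q_feasible t X} f"
      unfolding f_def frob_eq by (intro continuous_intros)
    obtain Xm where Xm: "Xm \<in> {X. Q_feasible t X}" and mn: "\<forall>X\<in>{X. Q_feasible t X}. f Xm \<le> f X"
      using continuous_attains_inf[OF Q_compact Qne fc] t1 by auto
    have "S_val E t = f Xm" unfolding S_val_def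
    proof (rule cInf_eq_minimum)
      show "f Xm \<in> {(1/2) * frob_inner (adj_matrix E) X | X. Q_feasible t X}" using Xm f_def by auto
    next
      fix v assume "v \<in> {(1/2) * frob_inner (adj_matrix E) X | X. Q_feasible t X}"
      then show "f Xm \<le> v" using mn f_def by auto
    qed
    then have "f Xm = 0" using H t_def by simp
    then have fz: "frob_inner (adj_matrix E) Xm = 0" by (simp add: f_def)
    have XQ: "Q_feasible t Xm" using Xm by simp
    then have Xn: "entrywise_nonneg Xm" and Xt: "transpose Xm = Xm" and Xp: "psd Xm"
      and Xtr: "trace Xm = t" and Xr: "\<forall>i. (\<Sum>j\<in>UNIV. Xm$i$j) = t * Xm$i$i"
      by (auto simp: Q_feasible_def rowsum_eq)
    have Xz: "\<forall>i j. E i j \<longrightarrow> Xm$i$j = 0" using frob_zero_D[OF Xn fz] by blast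
    have "psd (Xm - outer (diag_vec Xm) (diag_vec Xm))"
      using schur[OF Xp _ Xr Xtr] t1 by simp
    then have "t \<in> T" unfolding T_def using Xt Xz Xn Xtr by blast
    then have "t \<le> theta_plus E" unfolding th by (rule cSup_upper[OF _ bdd])
    then show "k \<le> \<lfloor>theta_plus E\<rfloor>" by (simp add: t_def le_floor_iff)
  qed
  show ?thesis using partA partB by blast
qed

end
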